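(* Let $\Omega\subset\mathbb{R}^N$ ($N\ge2$) be open, bounded, with Lipschitz boundary, let $\mathscr{V}$ be an admissible Hilbert space, and let $\rho_\varepsilon$ be the standard mollifier. Let $\{\boldsymbol{v}_n\}_n$ be uniformly bounded in $\mathscr{L}^2([0,1];\mathscr{V})$ and $\{f_0^n\}_n$ be uniformly bounded in $BV(\Omega)$, and let $\phi^{\boldsymbol{v}_n}_t$, $t\in[0,1]$, be the diffeomorphism flow generated by $\boldsymbol{v}_n$. Then, for each $t\in[0,1]$, the sequence $\{(f_0^n*\rho_\varepsilon)\circ(\phi^{\boldsymbol{v}_n}_t)^{-1}\}_n$ is uniformly bounded in $BV(\Omega)$.
   Context: A Hilbert space $\mathscr{V}\subset\mathscr{C}^1_0(\Omega;\mathbb{R}^N)$ is admissible if there is $C>0$ with $\|\boldsymbol{w}\|_{\mathscr{V}}\ge C\|\boldsymbol{w}\|_{1,\infty}$ for all $\boldsymbol{w}\in\mathscr{V}$. $\mathscr{L}^2([0,1];\mathscr{V})$ is the space of fields with $\boldsymbol{v}(t,\cdot)\in\mathscr{V}$ and norm $(\int_0^1\|\boldsymbol{v}(t,\cdot)\|_{\mathscr{V}}^2dt)^{1/2}$. The flow $\phi^{\boldsymbol{v}}_t:\Omega\to\Omega$ solves $\partial_t\phi_t(x)=\boldsymbol{v}(t,\phi_t(x))$, $\phi_0(x)=x$; each $\phi^{\boldsymbol{v}}_t$ is a $\mathscr{C}^1$-diffeomorphism. Standard mollifier: $\rho(x)=C\exp(1/(|x|^2-1))$ for $|x|<1$, $0$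 otherwise, $\int\rho=1$, $\rho_\varepsilon(x)=\varepsilon^{-N}\rho(x/\varepsilon)$ for a fixed $\varepsilon>0$; $(f*\rho_\varepsilon)(x)=\int_\Omega f(y)\rho_\varepsilon(x-y)\,dy$. The $BV(\Omega)$ norm is $\|f\|_{\mathscr{L}^1(\Omega)}+|Df|(\Omega)$. *)

theory Defs
  imports "HOL-Analysis.Analysis"
begin

text \<open>Strong Lipschitz boundary: near each boundary point p, in suitable
  coordinates (unit direction e, hyperplane orthogonal to e), Omega is the
  region below the graph of a Lipschitz function over the hyperplane.\<close>
definition lipschitz_boundary :: "'a::euclidean_space set \<Rightarrow> bool" where
  "lipschitz_boundary \<Omega> \<longleftrightarrow>
     (\<forall>p\<in>frontier \<Omega>. \<exists>e r h L (\<gamma>::'a \<Rightarrow> real).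
        norm e = 1 \<and> r > 0 \<and> h > 0 \<and>
        L-lipschitz_on {y. y \<bullet> e = 0} \<gamma> \<and> \<gamma> 0 = 0 \<and>
        (\<forall>y. y \<bullet> e = 0 \<and> norm y < r \<longrightarrow> \<bar>\<gamma> y\<bar> < h) \<and>
        (\<forall>y s. y \<bullet> e = 0 \<and> norm y < r \<and> \<bar>s\<bar> < h \<longrightarrow>
             (p + y + s *\<^sub>R e \<in> \<Omega> \<longleftrightarrow> s < \<gamma> y)))"

definition C1_everywhere :: "('a::euclidean_space \<Rightarrow> 'b::euclidean_space) \<Rightarrow> bool" where
  "C1_everywhere w \<longleftrightarrow>
     (\<exists>D :: 'a \<Rightarrow> ('a \<Rightarrow>\<^sub>L 'b). (\<forall>x. (w has_derivative blinfun_apply (D x)) (at x))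
         \<and> continuous_on UNIV D)"

text \<open>C^1_0(Omega;R^N): C^1 fields on Omega vanishing (with their derivative)
  at the boundary, represented by their extension by zero, which is C^1 on
  the whole space and vanishes outside Omega.\<close>
definition C1_0 :: "'a::euclidean_space set \<Rightarrow> ('a \<Rightarrow> 'a) set" where
  "C1_0 \<Omega> = {w. C1_everywhere w \<and> (\<forall>x. x \<notin> \<Omega> \<longrightarrow> w x = 0)}"

definition norm_1_inf :: "'a::euclidean_space set \<Rightarrow> ('a \<Rightarrow> 'a) \<Rightarrow> real" where
  "norm_1_inf \<Omega> w = (SUP x\<in>\<Omega>. norm (w x)) + (SUP x\<in>\<Omega>. onorm (frechet_derivative w (at x)))"

definition admissible :: "'a::euclidean_space set \<Rightarrow> ('v::{real_inner,complete_space} \<Rightarrow> ('a \<Rightarrow> 'a)) \<Rightarrow> bool" where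
  "admissible \<Omega> \<iota> \<longleftrightarrow>
     (\<forall>a b. \<iota> (a + b) = (\<lambda>x. \<iota> a x + \<iota> b x)) \<and>
     (\<forall>c a. \<iota> (c *\<^sub>R a) = (\<lambda>x. c *\<^sub>R \<iota> a x)) \<and> inj \<iota> \<and> range \<iota> \<subseteq> C1_0 \<Omega> \<and>
     (\<exists>C>0. \<forall>w. norm w \<ge> C * norm_1_inf \<Omega> (\<iota> w))"

definition in_L2V :: "(real \<Rightarrow> 'v::{real_inner,complete_space}) \<Rightarrow> bool" where
  "in_L2V v \<longleftrightarrow> v \<in> borel_measurable (restrict_space lborel {0..1}) \<and>
      set_integrable lborel {0..1::real} (\<lambda>t. (norm (v t))\<^sup>2)"

definition L2V_norm :: "(real \<Rightarrow> 'v::{real_inner,complete_space}) \<Rightarrow> real" where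
  "L2V_norm v = sqrt (LINT t:{0..1}|lborel. (norm (v t))\<^sup>2)"

text \<open>phi is the flow of the field iota(v(t)) on Omega:
  phi_t(x) = x + int_0^t v(s, phi_s(x)) ds (Caratheodory sense, since v is only
  L^2 in time), and each phi_t is a bijection of Omega (a C^1 diffeomorphism).\<close>
definition is_flow :: "'a::euclidean_space set \<Rightarrow> ('v \<Rightarrow> ('a \<Rightarrow> 'a)) \<Rightarrow> (real \<Rightarrow> 'v)
     \<Rightarrow> (real \<Rightarrow> 'a \<Rightarrow> 'a) \<Rightarrow> bool" where
  "is_flow \<Omega> \<iota> v \<phi> \<longleftrightarrow>
     (\<forall>x\<in>\<Omega>. \<phi> 0 x = x) \<and>
     (\<forall>t\<in>{0..1}. \<forall>x\<in>\<Omega>. ((\<lambda>s. \<iota> (v s) (\<phi> s x)) has_integral (\<phi> t x - x)) {0..t}) \<and>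
     (\<forall>t\<in>{0..1}. bij_betw (\<phi> t) \<Omega> \<Omega>)"

definition rho0 :: "'a::euclidean_space \<Rightarrow> real" where
  "rho0 x = (if norm x < 1 then exp (1 / ((norm x)\<^sup>2 - 1)) else 0)"

definition mollifier :: "'a::euclidean_space \<Rightarrow> real" where
  "mollifier x = rho0 x / (LINT y|lborel. rho0 (y::'a))"

definition mollifier_eps :: "real \<Rightarrow> 'a::euclidean_space \<Rightarrow> real" where
  "mollifier_eps \<epsilon> x = mollifier ((1/\<epsilon>) *\<^sub>R x) / \<epsilon> ^ DIM('a)"

definition moll_conv :: "'a::euclidean_space set \<Rightarrow> real \<Rightarrow> ('a \<Rightarrow> real) \<Rightarrow> 'a \<Rightarrow> real" where
  "moll_conv \<Omega> \<epsilon> f x = (LINT y:\<Omega>|lborel. f y * mollifier_eps \<epsilon> (x - y))"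

definition divergence :: "('a::euclidean_space \<Rightarrow> 'a) \<Rightarrow> 'a \<Rightarrow> real" where
  "divergence g x = (\<Sum>i\<in>Basis. frechet_derivative g (at x) i \<bullet> i)"

definition BV_test_fields :: "'a::euclidean_space set \<Rightarrow> ('a \<Rightarrow> 'a) set" where
  "BV_test_fields \<Omega> = {g. C1_everywhere g \<and> compact (closure {x. g x \<noteq> 0}) \<and>
       closure {x. g x \<noteq> 0} \<subseteq> \<Omega> \<and> (\<forall>x. norm (g x) \<le> 1)}"

definition total_variation :: "'a::euclidean_space set \<Rightarrow> ('a \<Rightarrow> real) \<Rightarrow> ereal" where
  "total_variation \<Omega> f =
     (SUP g\<in>BV_test_fields \<Omega>. ereal (LINT x:\<Omega>|lborel. f x * divergence g x))"

definition BV_norm :: "'a::euclidean_space set \<Rightarrow> ('a \<Rightarrow> real) \<Rightarrow> ereal" where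
  "BV_norm \<Omega> f = ereal (LINT x:\<Omega>|lborel. \<bar>f x\<bar>) + total_variation \<Omega> f"

definition BV_bounded :: "'a::euclidean_space set \<Rightarrow> (nat \<Rightarrow> 'a \<Rightarrow> real) \<Rightarrow> bool" where
  "BV_bounded \<Omega> F \<longleftrightarrow> (\<exists>M::real. \<forall>n. set_integrable lborel \<Omega> (F n) \<and> BV_norm \<Omega> (F n) \<le> ereal M)"

end

theory Submission
  imports Defs
begin


definition gfun :: "real \<Rightarrow> real" where
  "gfun s = (if s < 1 then exp (1/(s-1)) else 0)"

lemma exp_bound1: "u > 0 \<Longrightarrow> u * exp (-u) \<le> (4::real)"
proof -
  assume u: "u > 0"
  have "1 + u \<le> exp u" by (rule exp_ge_add_one_self)
  hence "u \<le> 4 * exp u" by (smt (verit) exp_gt_zero)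
  thus ?thesis by (simp add: exp_minus field_simps)
qed

lemma exp_bound2: "u > 0 \<Longrightarrow> u^2 * exp (-u) \<le> (4::real)"
proof -
  assume u: "u > 0"
  have "1 + u/2 \<le> exp (u/2)" by (rule exp_ge_add_one_self)
  hence "u/2 \<le> exp (u/2)" by linarith
  hence "(u/2)^2 \<le> (exp (u/2))^2" using u by (intro power_mono) auto
  also have "(exp (u/2))^2 = exp u" by (simp add: exp_double[symmetric])
  finally have "(u/2)^2 \<le> exp u" .
  hence "u^2 \<le> 4 * exp u" by (simp add: power_divide)
  thus ?thesis by (simp add: exp_minus field_simps)
qed

lemma gfun_lip_aux: assumes "s \<le> s'" shows "\<bar>gfun s - gfun s'\<bar> \<le> 4 * (s' - s)"
proof (cases "s' < 1")
  case True
  show ?thesis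
  proof (cases "s = s'")
    case False
    hence lt: "s < s'" using assms by auto
    define h where "h r = exp (1/(r-1))" for r :: real
    define h' where "h' r = exp (1/(r-1)) * (- 1 / (r-1)^2)" for r :: real
    have d: "\<forall>x. s \<le> x \<and> x \<le> s' \<longrightarrow> DERIV h x :> h' x"
    proof (intro allI impI)
      fix x assume "s \<le> x \<and> x \<le> s'"
      hence "x - 1 \<noteq> 0" using True by auto
      thus "DERIV h x :> h' x" unfolding h_def h'_def
        by (auto intro!: derivative_eq_intros simp: power2_eq_square field_simps)
    qed
    from MVT2[OF lt] d obtain z where z: "s < z" "z < s'" "h s' - h s = (s' - s) * h' z" by blast
    have hz: "\<bar>h' z\<bar> \<le> 4"
    proof -
      define u where "u = 1 / (1 - z)"
      have u: "u > 0" using z True by (simp add: u_def)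
      have z1: "1 - z > 0" using z True by auto
      have a1: "1/(z-1) = -u" using z1 by (simp add: u_def field_simps)
      have a2: "1/(z-1)^2 = u^2" using z1 by (simp add: u_def power2_eq_square field_simps)
      have "h' z = - (u^2 * exp (-u))" unfolding h'_def a1[symmetric]
        using a2 by (simp add: minus_divide_left)
      hence "\<bar>h' z\<bar> = u^2 * exp (-u)" by simp
      thus ?thesis using exp_bound2[OF u] by simp
    qed
    have e1: "\<bar>h s' - h s\<bar> = (s' - s) * \<bar>h' z\<bar>" using z lt by (simp add: abs_mult)
    have "(s' - s) * \<bar>h' z\<bar> \<le> (s' - s) * 4" by (rule mult_left_mono) (use lt hz in auto)
    hence "\<bar>h s' - h s\<bar> \<le> (s' - s) * 4" using e1 by linarith
    moreover have "gfun s = h s" "gfun s' = h s'" using True lt by (auto simp: gfun_def h_def)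
    ultimately show ?thesis by (simp add: abs_minus_commute)
  qed simp
next
  case False
  show ?thesis
  proof (cases "s < 1")
    case True
    define u where "u = 1 / (1 - s)"
    have u: "u > 0" using True by (simp add: u_def)
    have "gfun s = exp (-u)" using True by (simp add: gfun_def u_def field_simps)
    moreover have "u * exp (-u) \<le> 4" by (rule exp_bound1[OF u])
    hence "exp (-u) \<le> 4 * (1 - s)" using True by (simp add: u_def field_simps)
    ultimately show ?thesis using False True by (simp add: gfun_def)
  next
    case F2: False
    thus ?thesis using False assms by (simp add: gfun_def)
  qed
qed

lemma gfun_lip: "\<bar>gfun s - gfun s'\<bar> \<le> 4 * \<bar>s - s'\<bar>"
  by (cases "s \<le> s'") (use gfun_lip_aux[of s s'] gfun_lip_aux[of s' s] in \<open>auto simp: abs_minus_commute\<close>)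

lemma rho0_gfun: "rho0 x = gfun ((norm x)^2)"
proof -
  have "norm x < 1 \<longleftrightarrow> (norm x)^2 < 1"
    using abs_square_less_1[of "norm x"] by simp
  thus ?thesis by (simp add: rho0_def gfun_def)
qed

lemma rho0_nonneg: "0 \<le> rho0 x" by (simp add: rho0_def)

lemma rho0_le1: "rho0 x \<le> 1"
proof -
  have "norm x < 1 \<Longrightarrow> 1 / ((norm x)^2 - 1) \<le> 0"
  proof -
    assume "norm x < 1"
    hence "(norm x)^2 < 1" using abs_square_less_1[of "norm x"] by simp
    thus ?thesis by (simp add: divide_nonpos_neg)
  qed
  thus ?thesis by (auto simp: rho0_def)
qed

lemma rho0_zero: "norm x \<ge> 1 \<Longrightarrow> rho0 x = 0" by (simp add: rho0_def)

lemma rho0_lip_aux: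
  fixes x y :: "'a::euclidean_space"
  assumes "norm y > 2"
  shows "\<bar>rho0 x - rho0 y\<bar> \<le> 16 * norm (x - y)"
proof -
  have y0: "rho0 y = 0" by (rule rho0_zero) (use assms in linarith)
  show ?thesis
  proof (cases "norm x < 1")
    case True
    have "norm y \<le> norm x + norm (x - y)"
      using norm_triangle_ineq[of x "y - x"] norm_minus_commute[of y x] by simp
    hence "1 \<le> norm (x - y)" using True assms by linarith
    moreover have "\<bar>rho0 x - rho0 y\<bar> = rho0 x" using y0 rho0_nonneg[of x] by simp
    ultimately show ?thesis using rho0_le1[of x] by linarith
  next
    case False
    hence "rho0 x = 0" by (intro rho0_zero) linarith
    thus ?thesis using y0 by simp
  qed
qed

lemma rho0_lip:
  fixes x y :: "'a::euclidean_space"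
  shows "\<bar>rho0 x - rho0 y\<bar> \<le> 16 * norm (x - y)"
proof (cases "norm x \<le> 2 \<and> norm y \<le> 2")
  case True
  have e: "(norm x)^2 - (norm y)^2 = (norm x + norm y) * (norm x - norm y)"
    by (simp add: power2_eq_square algebra_simps)
  have "\<bar>rho0 x - rho0 y\<bar> \<le> 4 * \<bar>(norm x)^2 - (norm y)^2\<bar>"
    unfolding rho0_gfun by (rule gfun_lip)
  also have "\<bar>(norm x)^2 - (norm y)^2\<bar> = (norm x + norm y) * \<bar>norm x - norm y\<bar>"
    unfolding e by (simp add: abs_mult)
  also have "\<dots> \<le> 4 * norm (x - y)"
  proof (rule mult_mono)
    show "norm x + norm y \<le> 4" using True by linarith
    show "\<bar>norm x - norm y\<bar> \<le> norm (x - y)" by (rule norm_triangle_ineq3)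
  qed simp_all
  finally show ?thesis by simp
next
  case False
  thus ?thesis
  proof (cases "norm y > 2")
    case True thus ?thesis by (rule rho0_lip_aux)
  next
    case F: False
    hence "norm x > 2" using False by auto
    from rho0_lip_aux[OF this, of y] show ?thesis by (simp add: abs_minus_commute norm_minus_commute)
  qed
qed

lemma gfun_measurable[measurable]: "gfun \<in> borel_measurable borel"
  unfolding gfun_def by measurable

lemma rho0_measurable[measurable]: "rho0 \<in> borel_measurable borel"
proof -
  have "rho0 = (\<lambda>x::'a. gfun ((norm x)^2))" by (rule ext, rule rho0_gfun)
  moreover have "(\<lambda>x::'a. gfun ((norm x)^2)) \<in> borel_measurable borel" by measurable
  ultimately show ?thesis by simp
qed

lemma moll_bounds:
  assumes "\<epsilon> > 0"
  obtains c where "\<And>z. \<bar>mollifier_eps \<epsilon> (z::'a::euclidean_space)\<bar> \<le> c"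
    "\<And>z z'. \<bar>mollifier_eps \<epsilon> (z::'a) - mollifier_eps \<epsilon> z'\<bar> \<le> c * norm (z - z')"
    "mollifier_eps \<epsilon> \<in> borel_measurable (borel :: 'a measure)"
proof -
  define Z where "Z = (LINT y|lborel. rho0 (y::'a))"
  define k where "k = \<bar>1 / Z / \<epsilon> ^ DIM('a)\<bar>"
  have me: "mollifier_eps \<epsilon> z = rho0 ((1/\<epsilon>) *\<^sub>R z) * (1 / Z / \<epsilon> ^ DIM('a))" for z :: 'a
    by (simp add: mollifier_eps_def mollifier_def Z_def)
  have b1: "\<bar>mollifier_eps \<epsilon> z\<bar> \<le> k" for z :: 'a
  proof -
    have "\<bar>rho0 ((1/\<epsilon>) *\<^sub>R z)\<bar> \<le> 1" using rho0_le1[of "(1/\<epsilon>) *\<^sub>R z"] rho0_nonneg[of "(1/\<epsilon>) *\<^sub>R z"] by simp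
    thus ?thesis unfolding me k_def abs_mult by (intro mult_left_le_one_le) auto
  qed
  have b2: "\<bar>mollifier_eps \<epsilon> z - mollifier_eps \<epsilon> z'\<bar> \<le> (k * 16 / \<epsilon>) * norm (z - z')" for z z' :: 'a
  proof -
    have "\<bar>mollifier_eps \<epsilon> z - mollifier_eps \<epsilon> z'\<bar> = \<bar>rho0 ((1/\<epsilon>) *\<^sub>R z) - rho0 ((1/\<epsilon>) *\<^sub>R z')\<bar> * k"
      unfolding me k_def by (simp only: left_diff_distrib[symmetric] abs_mult)
    also have "\<dots> \<le> (16 * norm ((1/\<epsilon>) *\<^sub>R z - (1/\<epsilon>) *\<^sub>R z')) * k"
      by (intro mult_right_mono rho0_lip) (auto simp: k_def)
    also have "norm ((1/\<epsilon>) *\<^sub>R z - (1/\<epsilon>) *\<^sub>R z') = norm (z - z') / \<epsilon>"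
      using assms by (simp add: scaleR_diff_right[symmetric])
    finally show ?thesis by (simp add: field_simps)
  qed
  have m0: "(\<lambda>z::'a. rho0 ((1/\<epsilon>) *\<^sub>R z) * (1 / Z / \<epsilon> ^ DIM('a))) \<in> borel_measurable borel"
    by measurable
  have m: "mollifier_eps \<epsilon> \<in> borel_measurable (borel :: 'a measure)"
    using m0 by (simp add: me[abs_def])
  show ?thesis
  proof (rule that[of "max k (k * 16 / \<epsilon>)"])
    show "\<bar>mollifier_eps \<epsilon> z\<bar> \<le> max k (k * 16 / \<epsilon>)" for z :: 'a
      using b1[of z] by linarith
    show "\<bar>mollifier_eps \<epsilon> z - mollifier_eps \<epsilon> z'\<bar> \<le> max k (k * 16 / \<epsilon>) * norm (z - z')" for z z' :: 'a
      using b2[of z z'] mult_right_mono[of "k * 16 / \<epsilon>" "max k (k * 16 / \<epsilon>)" "norm (z - z')"] by simp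
  qed (rule m)
qed



lemma C1_lip:
  fixes f :: "'a::euclidean_space \<Rightarrow> 'a"
  assumes f: "f \<in> C1_0 \<Omega>" and bnd: "bounded \<Omega>" and ne: "x0 \<in> \<Omega>"
  shows "norm (f p - f q) \<le> (SUP x\<in>\<Omega>. onorm (frechet_derivative f (at x))) * norm (p - q)"
    and "0 \<le> (SUP x\<in>\<Omega>. norm (f x))"
    and "0 \<le> (SUP x\<in>\<Omega>. onorm (frechet_derivative f (at x)))"
proof -
  from f obtain D where D: "\<And>x. (f has_derivative blinfun_apply (D x)) (at x)"
    and Dc: "continuous_on UNIV D" and z: "\<And>x. x \<notin> \<Omega> \<Longrightarrow> f x = 0"
    unfolding C1_0_def C1_everywhere_def by blast
  have fd: "frechet_derivative f (at x) = blinfun_apply (D x)" for x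
    using frechet_derivative_at[OF D[of x]] by simp
  have on: "onorm (frechet_derivative f (at x)) = norm (D x)" for x
    unfolding fd by (simp add: norm_blinfun.rep_eq)
  define B where "B = (SUP x\<in>\<Omega>. norm (D x))"
  have cpt: "compact (closure \<Omega>)" using bnd by (simp add: compact_closure)
  have "compact (D ` closure \<Omega>)"
    by (rule compact_continuous_image[OF continuous_on_subset[OF Dc] cpt]) simp
  hence "bounded (D ` closure \<Omega>)" by (rule compact_imp_bounded)
  then obtain b where b: "\<And>x. x \<in> closure \<Omega> \<Longrightarrow> norm (D x) \<le> b"
    unfolding bounded_iff by blast
  have bdd: "bdd_above ((\<lambda>x. norm (D x)) ` \<Omega>)"
    using b closure_subset by (intro bdd_aboveI2[of _ _ b]) blast
  have le: "norm (D x) \<le> B" if "x \<in> \<Omega>" for x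
    unfolding B_def using bdd that by (rule cSUP_upper2) simp
  have B0: "0 \<le> B" using le[OF ne] norm_ge_zero[of "D x0"] by linarith
  have allz: "norm (D z) \<le> B" for z
  proof (cases "z \<in> closure \<Omega>")
    case True
    have "continuous_on (closure \<Omega>) D" using continuous_on_subset[OF Dc] by simp
    from continuous_on_closure_norm_le[OF this _ True, of B] le show ?thesis by blast
  next
    case False
    have "((\<lambda>_. 0) has_derivative (\<lambda>_. 0)) (at z)" by simp
    hence "(f has_derivative (\<lambda>_. 0)) (at z)"
    proof (rule has_derivative_transform_within_open[where s="- closure \<Omega>"])
      show "open (- closure \<Omega>)" by (intro open_Compl closed_closure)
      show "z \<in> - closure \<Omega>" using False by simp
      show "\<And>x. x \<in> - closure \<Omega> \<Longrightarrow> 0 = f x" using z closure_subset by fastforce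
    qed
    hence "blinfun_apply (D z) = (\<lambda>_. 0)" using has_derivative_unique[OF D[of z]] by blast
    hence "D z = 0" by (metis blinfun_eqI zero_blinfun.rep_eq)
    thus ?thesis using B0 by simp
  qed
  have "norm (f p - f q) \<le> B * norm (p - q)"
    by (rule differentiable_bound[where S=UNIV and f'="\<lambda>x. blinfun_apply (D x)"])
       (use D allz in \<open>auto simp: norm_blinfun.rep_eq\<close>)
  moreover have "(SUP x\<in>\<Omega>. onorm (frechet_derivative f (at x))) = B"
    unfolding B_def on ..
  ultimately show "norm (f p - f q) \<le> (SUP x\<in>\<Omega>. onorm (frechet_derivative f (at x))) * norm (p - q)"
    by simp
  show "0 \<le> (SUP x\<in>\<Omega>. onorm (frechet_derivative f (at x)))" unfolding on B_def[symmetric] by (rule B0)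
  have fc: "continuous_on UNIV f"
    using D by (intro has_derivative_continuous_on) auto
  have "compact (f ` closure \<Omega>)"
    by (rule compact_continuous_image[OF continuous_on_subset[OF fc] cpt]) simp
  hence "bounded (f ` closure \<Omega>)" by (rule compact_imp_bounded)
  then obtain c where c: "\<And>x. x \<in> closure \<Omega> \<Longrightarrow> norm (f x) \<le> c"
    unfolding bounded_iff by blast
  have bddf: "bdd_above ((\<lambda>x. norm (f x)) ` \<Omega>)"
    using c closure_subset by (intro bdd_aboveI2[of _ _ c]) blast
  have "norm (f x0) \<le> (SUP x\<in>\<Omega>. norm (f x))" using bddf ne by (rule cSUP_upper2) simp
  thus "0 \<le> (SUP x\<in>\<Omega>. norm (f x))" using norm_ge_zero[of "f x0"] by linarith
qed

lemma iota_lip: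
  fixes \<Omega> :: "'a::euclidean_space set"
  assumes adm: "admissible \<Omega> \<iota>" and bnd: "bounded \<Omega>" and ne: "\<Omega> \<noteq> {}"
  obtains C :: real where "C > 0"
    "\<And>w p q. norm (\<iota> w p - \<iota> w q) \<le> (norm w / C) * norm (p - q)"
proof -
  from adm obtain C where C: "C > 0" "\<And>w. norm w \<ge> C * norm_1_inf \<Omega> (\<iota> w)"
    and rng: "range \<iota> \<subseteq> C1_0 \<Omega>"
    unfolding admissible_def by blast
  from ne obtain x0 where x0: "x0 \<in> \<Omega>" by blast
  show ?thesis
  proof (rule that[OF C(1)])
    fix w and p q :: 'a
    have f: "\<iota> w \<in> C1_0 \<Omega>" using rng by blast
    note l = C1_lip(1)[OF f bnd x0, of p q] C1_lip(2)[OF f bnd x0] C1_lip(3)[OF f bnd x0]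
    have "C * (SUP x\<in>\<Omega>. onorm (frechet_derivative (\<iota> w) (at x))) \<le> C * norm_1_inf \<Omega> (\<iota> w)"
      using l(2) C(1) unfolding norm_1_inf_def by (intro mult_left_mono) auto
    also have "\<dots> \<le> norm w" by (rule C(2))
    finally have "(SUP x\<in>\<Omega>. onorm (frechet_derivative (\<iota> w) (at x))) \<le> norm w / C"
      using C(1) by (simp add: field_simps)
    hence "(SUP x\<in>\<Omega>. onorm (frechet_derivative (\<iota> w) (at x))) * norm (p - q) \<le> (norm w / C) * norm (p - q)"
      by (rule mult_right_mono) simp
    thus "norm (\<iota> w p - \<iota> w q) \<le> (norm w / C) * norm (p - q)" using l(1) by linarith
  qed
qed



lemma L2_facts:
  fixes v :: "real \<Rightarrow> 'v::{real_inner,complete_space}"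
  assumes "in_L2V v" "L2V_norm v \<le> K"
  shows "(\<lambda>s. norm (v s)) integrable_on {0..1}"
    and "(\<lambda>s. (norm (v s))\<^sup>2) integrable_on {0..1}"
    and "integral {0..1} (\<lambda>s. (norm (v s))\<^sup>2) \<le> K\<^sup>2"
    and "0 \<le> K"
proof -
  have si: "set_integrable lborel {0..1::real} (\<lambda>t. (norm (v t))\<^sup>2)"
    using assms(1) unfolding in_L2V_def by blast
  note e = set_borel_integral_eq_integral[OF si]
  show i2: "(\<lambda>s. (norm (v s))\<^sup>2) integrable_on {0..1}" by (rule e(1))
  have I0: "0 \<le> integral {0..1} (\<lambda>s. (norm (v s))\<^sup>2)"
    by (rule Henstock_Kurzweil_Integration.integral_nonneg[OF i2]) simp
  have "sqrt (integral {0..1} (\<lambda>s. (norm (v s))\<^sup>2)) \<le> K"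
    using assms(2) unfolding L2V_norm_def e(2) .
  thus K0: "0 \<le> K" using real_sqrt_ge_zero[OF I0] by linarith
  from \<open>sqrt _ \<le> K\<close> show "integral {0..1} (\<lambda>s. (norm (v s))\<^sup>2) \<le> K\<^sup>2"
  proof -
    have "(sqrt (integral {0..1} (\<lambda>s. (norm (v s))\<^sup>2)))\<^sup>2 \<le> K\<^sup>2"
      by (rule power_mono[OF \<open>sqrt _ \<le> K\<close>]) (use I0 in simp)
    thus ?thesis using I0 by simp
  qed
  have m2: "(\<lambda>s. (norm (v s))\<^sup>2) \<in> borel_measurable (lebesgue_on {0..1})"
    by (rule integrable_imp_measurable[OF i2])
  have m1: "(\<lambda>s. sqrt ((norm (v s))\<^sup>2)) \<in> borel_measurable (lebesgue_on {0..1})"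
    using measurable_compose[OF m2 borel_measurable_sqrt] by (simp add: o_def)
  hence m1': "(\<lambda>s. norm (v s)) \<in> borel_measurable (lebesgue_on {0..1})" by simp
  have ig: "(\<lambda>s. (norm (v s))\<^sup>2 + 1) integrable_on {0..1}"
    by (intro integrable_add i2 integrable_const_ivl)
  show "(\<lambda>s. norm (v s)) integrable_on {0..1}"
  proof (rule measurable_bounded_by_integrable_imp_integrable[OF m1' ig])
    fix s :: real
    have "norm (v s) \<le> (norm (v s))\<^sup>2 + 1"
    proof (cases "norm (v s) \<le> 1")
      case False
      hence "norm (v s) * 1 \<le> norm (v s) * norm (v s)" by (intro mult_left_mono) auto
      thus ?thesis by (simp add: power2_eq_square)
    qed (simp add: add_increasing)
    thus "norm (norm (v s)) \<le> (norm (v s))\<^sup>2 + 1" by simp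
  qed simp
qed

lemma amgm_aux:
  fixes N \<alpha> :: real assumes "\<alpha> > 0" shows "N \<le> (\<alpha> * N\<^sup>2 + 1/\<alpha>) / 2"
proof -
  have "0 \<le> (\<alpha> * N - 1)\<^sup>2" by simp
  hence "0 \<le> \<alpha> * (\<alpha> * N\<^sup>2 + 1/\<alpha> - 2 * N)" using assms
    by (simp add: power2_eq_square algebra_simps)
  hence "0 \<le> \<alpha> * N\<^sup>2 + 1/\<alpha> - 2 * N" using assms by (simp add: zero_le_mult_iff)
  thus ?thesis by simp
qed

lemma small_int:
  fixes v :: "real \<Rightarrow> 'v::{real_inner,complete_space}"
  assumes L2: "in_L2V v" "L2V_norm v \<le> K" and C: "C > 0"
    and ab: "0 \<le> a" "a \<le> b" "b \<le> 1" "b - a \<le> C\<^sup>2 / (4 * (K\<^sup>2 + 1))"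
  shows "integral {a..b} (\<lambda>s. norm (v s)) \<le> C / 2"
proof -
  note F = L2_facts[OF L2]
  define \<alpha> where "\<alpha> = C / (2 * (K\<^sup>2 + 1))"
  have K1: "K\<^sup>2 + 1 > 0" by (simp add: add_nonneg_pos)
  have \<alpha>: "\<alpha> > 0" using C K1 by (simp add: \<alpha>_def)
  have sub: "{a..b} \<subseteq> {0..1}" using ab by auto
  have i1: "(\<lambda>s. norm (v s)) integrable_on {a..b}" by (rule integrable_on_subinterval[OF F(1) sub])
  have i2: "(\<lambda>s. (norm (v s))\<^sup>2) integrable_on {a..b}" by (rule integrable_on_subinterval[OF F(2) sub])
  have i3: "(\<lambda>s. (\<alpha>/2) *\<^sub>R (norm (v s))\<^sup>2 + 1/(2*\<alpha>)) integrable_on {a..b}"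
    by (intro integrable_add integrable_cmul i2 integrable_const_ivl)
  have "integral {a..b} (\<lambda>s. norm (v s)) \<le> integral {a..b} (\<lambda>s. (\<alpha>/2) *\<^sub>R (norm (v s))\<^sup>2 + 1/(2*\<alpha>))"
  proof (rule integral_le[OF i1 i3])
    fix s show "norm (v s) \<le> (\<alpha>/2) *\<^sub>R (norm (v s))\<^sup>2 + 1/(2*\<alpha>)"
      using amgm_aux[OF \<alpha>, of "norm (v s)"] by (simp add: field_simps)
  qed
  also have "\<dots> = (\<alpha> * integral {a..b} (\<lambda>s. (norm (v s))\<^sup>2) + (b - a) / \<alpha>) / 2"
  proof -
    have "integral {a..b} (\<lambda>s. (\<alpha>/2) *\<^sub>R (norm (v s))\<^sup>2 + 1/(2*\<alpha>))
       = integral {a..b} (\<lambda>s. (\<alpha>/2) *\<^sub>R (norm (v s))\<^sup>2) + integral {a..b} (\<lambda>s. 1/(2*\<alpha>))"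
      by (rule integral_add) (use integrable_cmul[OF i2, of "\<alpha>/2"] in auto)
    also have "\<dots> = (\<alpha>/2) * integral {a..b} (\<lambda>s. (norm (v s))\<^sup>2) + (b - a) * (1/(2*\<alpha>))"
      using ab by simp
    finally show ?thesis using \<alpha> by (simp add: field_simps)
  qed
  also have "\<dots> \<le> (\<alpha> * K\<^sup>2 + (C\<^sup>2 / (4 * (K\<^sup>2 + 1))) / \<alpha>) / 2"
  proof -
    have "integral {a..b} (\<lambda>s. (norm (v s))\<^sup>2) \<le> integral {0..1} (\<lambda>s. (norm (v s))\<^sup>2)"
      by (rule integral_subset_le[OF sub i2 F(2)]) simp
    also have "\<dots> \<le> K\<^sup>2" by (rule F(3))
    finally have "\<alpha> * integral {a..b} (\<lambda>s. (norm (v s))\<^sup>2) \<le> \<alpha> * K\<^sup>2"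
      using \<alpha> by (simp add: mult_left_mono)
    moreover have "(b - a) / \<alpha> \<le> (C\<^sup>2 / (4 * (K\<^sup>2 + 1))) / \<alpha>"
      by (rule divide_right_mono[OF ab(4)]) (use \<alpha> in simp)
    ultimately have "\<alpha> * integral {a..b} (\<lambda>s. (norm (v s))\<^sup>2) + (b - a) / \<alpha>
       \<le> \<alpha> * K\<^sup>2 + (C\<^sup>2 / (4 * (K\<^sup>2 + 1))) / \<alpha>" by (rule add_mono)
    thus ?thesis by (rule divide_right_mono) simp
  qed
  also have "\<dots> \<le> C / 2"
  proof -
    have k: "\<alpha> * K\<^sup>2 \<le> C / 2"
      using C K1 by (simp add: \<alpha>_def field_simps)
    have gen: "P > 0 \<Longrightarrow> (C\<^sup>2 / (4 * P)) / (C / (2 * P)) = C / 2" for P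
      using C by (simp add: field_simps power2_eq_square)
    have c: "(C\<^sup>2 / (4 * (K\<^sup>2 + 1))) / \<alpha> = C / 2"
      unfolding \<alpha>_def by (rule gen[OF K1])
    have g2: "X \<le> C / 2 \<Longrightarrow> (X + C / 2) / 2 \<le> C / 2" for X :: real by argo
    show ?thesis unfolding c by (rule g2[OF k])
  qed
  finally show ?thesis .
qed

lemma flow_incr:
  assumes fl: "is_flow \<Omega> \<iota> v \<phi>" and x: "x \<in> \<Omega>" and as: "0 \<le> a" "a \<le> s" "s \<le> 1"
  shows "(\<lambda>r. \<iota> (v r) (\<phi> r x)) integrable_on {a..s}"
    and "integral {a..s} (\<lambda>r. \<iota> (v r) (\<phi> r x)) = \<phi> s x - \<phi> a x"
proof -
  have hs: "((\<lambda>r. \<iota> (v r) (\<phi> r x)) has_integral (\<phi> s x - x)) {0..s}"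
    using fl x as unfolding is_flow_def by auto
  have ha: "((\<lambda>r. \<iota> (v r) (\<phi> r x)) has_integral (\<phi> a x - x)) {0..a}"
    using fl x as unfolding is_flow_def by auto
  have is_: "(\<lambda>r. \<iota> (v r) (\<phi> r x)) integrable_on {0..s}" using hs by blast
  show "(\<lambda>r. \<iota> (v r) (\<phi> r x)) integrable_on {a..s}"
    by (rule integrable_on_subinterval[OF is_]) (use as in auto)
  have "integral {0..a} (\<lambda>r. \<iota> (v r) (\<phi> r x)) + integral {a..s} (\<lambda>r. \<iota> (v r) (\<phi> r x))
        = integral {0..s} (\<lambda>r. \<iota> (v r) (\<phi> r x))"
    by (rule Henstock_Kurzweil_Integration.integral_combine[OF as(1) as(2) is_])
  moreover have "integral {0..s} (\<lambda>r. \<iota> (v r) (\<phi> r x)) = \<phi> s x - x" using hs by (rule integral_unique)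
  moreover have "integral {0..a} (\<lambda>r. \<iota> (v r) (\<phi> r x)) = \<phi> a x - x" using ha by (rule integral_unique)
  ultimately show "integral {a..s} (\<lambda>r. \<iota> (v r) (\<phi> r x)) = \<phi> s x - \<phi> a x"
    by (simp add: algebra_simps)
qed



lemma flow_step:
  fixes \<Omega> :: "'a::euclidean_space set" and \<iota> :: "'v::{real_inner,complete_space} \<Rightarrow> 'a \<Rightarrow> 'a"
    and v :: "real \<Rightarrow> 'v" and \<phi> :: "real \<Rightarrow> 'a \<Rightarrow> 'a"
  assumes fl: "is_flow \<Omega> \<iota> v \<phi>" and L2: "in_L2V v" "L2V_norm v \<le> K" and C: "C > 0"
    and lip: "\<And>w p q. norm (\<iota> w p - \<iota> w q) \<le> (norm w / C) * norm (p - q)"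
    and bnd: "bounded \<Omega>" and x: "x \<in> \<Omega>" and y: "y \<in> \<Omega>"
    and ab: "0 \<le> a" "a \<le> b" "b \<le> 1" "b - a \<le> C\<^sup>2 / (4 * (K\<^sup>2 + 1))"
  shows "norm (\<phi> a x - \<phi> a y) \<le> 2 * norm (\<phi> b x - \<phi> b y)"
proof -
  define d where "d r = norm (\<phi> r x - \<phi> r y)" for r
  note F = L2_facts[OF L2]
  from bnd obtain R where R: "\<And>z. z \<in> \<Omega> \<Longrightarrow> norm z \<le> R" unfolding bounded_iff by blast
  have inO: "\<phi> r z \<in> \<Omega>" if "r \<in> {0..1}" "z \<in> \<Omega>" for r z
    using fl that unfolding is_flow_def by (meson bij_betwE)
  have dR: "d r \<le> 2 * R" if "r \<in> {a..b}" for r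
  proof -
    have r01: "r \<in> {0..1}" using that ab by auto
    have "d r \<le> norm (\<phi> r x) + norm (\<phi> r y)" unfolding d_def by (rule norm_triangle_ineq4)
    also have "\<dots> \<le> R + R" using R[OF inO[OF r01 x]] R[OF inO[OF r01 y]] by (rule add_mono)
    finally show ?thesis by simp
  qed
  define S where "S = (SUP r\<in>{a..b}. d r)"
  have bdd: "bdd_above (d ` {a..b})" using dR by (intro bdd_aboveI2) blast
  have dS: "d r \<le> S" if "r \<in> {a..b}" for r unfolding S_def by (rule cSUP_upper[OF that bdd])
  have S0: "0 \<le> S" using dS[of a] ab by (simp add: d_def) (meson norm_ge_zero order_trans)
  have IN: "integral {a..b} (\<lambda>s. norm (v s)) \<le> C / 2" by (rule small_int[OF L2 C ab])
  have key: "norm ((\<phi> s x - \<phi> s y) - (\<phi> s' x - \<phi> s' y)) \<le> S / 2"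
    if ss: "s' \<le> s" "s' \<in> {a..b}" "s \<in> {a..b}" for s s'
  proof -
    have s0: "0 \<le> s'" "s \<le> 1" using ss ab by auto
    note ix = flow_incr[OF fl x s0(1) ss(1) s0(2)]
    note iy = flow_incr[OF fl y s0(1) ss(1) s0(2)]
    have sub: "{s'..s} \<subseteq> {0..1}" "{s'..s} \<subseteq> {a..b}" using ss ab by auto
    have iN: "(\<lambda>r. norm (v r)) integrable_on {s'..s}" by (rule integrable_on_subinterval[OF F(1) sub(1)])
    have iNab: "(\<lambda>r. norm (v r)) integrable_on {a..b}" by (rule integrable_on_subinterval[OF F(1)]) (use ab in auto)
    have "(\<phi> s x - \<phi> s y) - (\<phi> s' x - \<phi> s' y)
        = integral {s'..s} (\<lambda>r. \<iota> (v r) (\<phi> r x)) - integral {s'..s} (\<lambda>r. \<iota> (v r) (\<phi> r y))"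
      using ix(2) iy(2) by simp
    also have "\<dots> = integral {s'..s} (\<lambda>r. \<iota> (v r) (\<phi> r x) - \<iota> (v r) (\<phi> r y))"
      by (rule integral_diff[symmetric, OF ix(1) iy(1)])
    finally have eq: "(\<phi> s x - \<phi> s y) - (\<phi> s' x - \<phi> s' y) = \<dots>" .
    have "norm (integral {s'..s} (\<lambda>r. \<iota> (v r) (\<phi> r x) - \<iota> (v r) (\<phi> r y)))
        \<le> integral {s'..s} (\<lambda>r. (S / C) *\<^sub>R norm (v r))"
    proof (rule integral_norm_bound_integral)
      show "(\<lambda>r. \<iota> (v r) (\<phi> r x) - \<iota> (v r) (\<phi> r y)) integrable_on {s'..s}"
        by (rule integrable_diff[OF ix(1) iy(1)])
      show "(\<lambda>r. (S / C) *\<^sub>R norm (v r)) integrable_on {s'..s}" by (rule integrable_cmul[OF iN])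
      fix r assume r: "r \<in> {s'..s}"
      have "norm (\<iota> (v r) (\<phi> r x) - \<iota> (v r) (\<phi> r y)) \<le> (norm (v r) / C) * d r"
        unfolding d_def by (rule lip)
      also have "\<dots> \<le> (norm (v r) / C) * S"
        by (rule mult_left_mono[OF dS]) (use r sub C in auto)
      finally show "norm (\<iota> (v r) (\<phi> r x) - \<iota> (v r) (\<phi> r y)) \<le> (S / C) *\<^sub>R norm (v r)"
        by (simp add: field_simps)
    qed
    also have "\<dots> = (S / C) * integral {s'..s} (\<lambda>r. norm (v r))" by simp
    also have "\<dots> \<le> (S / C) * integral {a..b} (\<lambda>r. norm (v r))"
      by (rule mult_left_mono[OF integral_subset_le[OF sub(2) iN iNab]]) (use S0 C in auto)
    also have "\<dots> \<le> (S / C) * (C / 2)" by (rule mult_left_mono[OF IN]) (use S0 C in auto)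
    also have "\<dots> = S / 2" using C by simp
    finally show ?thesis unfolding eq .
  qed
  have key2: "d s \<le> d s' + S / 2" if "s \<in> {a..b}" "s' \<in> {a..b}" for s s'
  proof -
    have "norm ((\<phi> s x - \<phi> s y) - (\<phi> s' x - \<phi> s' y)) \<le> S / 2"
    proof (cases "s' \<le> s")
      case True thus ?thesis using key that by blast
    next
      case False
      hence "norm ((\<phi> s' x - \<phi> s' y) - (\<phi> s x - \<phi> s y)) \<le> S / 2" using key that by simp
      thus ?thesis by (simp add: norm_minus_commute)
    qed
    moreover have "d s \<le> d s' + norm ((\<phi> s x - \<phi> s y) - (\<phi> s' x - \<phi> s' y))"
      unfolding d_def by (rule norm_triangle_sub)
    ultimately show ?thesis by linarith
  qed
  have "S \<le> d b + S / 2" unfolding S_def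
    by (rule cSUP_least) (use ab key2 in \<open>auto simp: S_def\<close>)
  hence "S \<le> 2 * d b" by argo
  moreover have "d a \<le> S" using dS ab by auto
  ultimately show ?thesis unfolding d_def by linarith
qed

lemma flow_inv_lip:
  fixes \<Omega> :: "'a::euclidean_space set" and \<iota> :: "'v::{real_inner,complete_space} \<Rightarrow> 'a \<Rightarrow> 'a"
    and v :: "real \<Rightarrow> 'v" and \<phi> :: "real \<Rightarrow> 'a \<Rightarrow> 'a"
  assumes fl: "is_flow \<Omega> \<iota> v \<phi>" and L2: "in_L2V v" "L2V_norm v \<le> K" and C: "C > 0"
    and lip: "\<And>w p q. norm (\<iota> w p - \<iota> w q) \<le> (norm w / C) * norm (p - q)"
    and bnd: "bounded \<Omega>" and x: "x \<in> \<Omega>" and y: "y \<in> \<Omega>" and t: "t \<in> {0..1}"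
  shows "norm (x - y) \<le> 2 ^ (nat \<lceil>4 * (K\<^sup>2 + 1) / C\<^sup>2\<rceil> + 1) * norm (\<phi> t x - \<phi> t y)"
proof -
  define m where "m = nat \<lceil>4 * (K\<^sup>2 + 1) / C\<^sup>2\<rceil> + 1"
  define d where "d r = norm (\<phi> r x - \<phi> r y)" for r
  have m0: "m > 0" by (simp add: m_def)
  have K1: "K\<^sup>2 + 1 > 0" by (simp add: add_nonneg_pos)
  have Q: "4 * (K\<^sup>2 + 1) / C\<^sup>2 > 0" using K1 C by simp
  have mge: "real m \<ge> 4 * (K\<^sup>2 + 1) / C\<^sup>2"
    unfolding m_def using Q by linarith
  have mQ: "0 < real m * (4 * (K\<^sup>2 + 1) / C\<^sup>2)" by (rule mult_pos_pos) (use m0 Q in auto)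
  have step: "t / m \<le> C\<^sup>2 / (4 * (K\<^sup>2 + 1))"
  proof -
    have "t / m \<le> 1 / m" using t m0 by (simp add: divide_right_mono)
    also have "\<dots> \<le> 1 / (4 * (K\<^sup>2 + 1) / C\<^sup>2)"
      by (rule divide_left_mono[OF mge]) (use mQ in auto)
    also have "\<dots> = C\<^sup>2 / (4 * (K\<^sup>2 + 1))" by simp
    finally show ?thesis .
  qed
  have ind: "k \<le> m \<Longrightarrow> d 0 \<le> 2 ^ k * d (k * t / m)" for k
  proof (induction k)
    case 0 thus ?case by simp
  next
    case (Suc k)
    hence IH: "d 0 \<le> 2 ^ k * d (k * t / m)" by simp
    have a0: "0 \<le> k * t / m" using t by simp
    have "real k * t \<le> real (Suc k) * t" using t by (intro mult_right_mono) auto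
    hence ab: "k * t / m \<le> Suc k * t / m" by (rule divide_right_mono) simp
    have b1: "Suc k * t / m \<le> 1"
    proof -
      have "real (Suc k) * t \<le> real m * 1" using Suc.prems t by (intro mult_mono) auto
      thus ?thesis using m0 by (simp add: divide_le_eq)
    qed
    have w: "Suc k * t / m - k * t / m = t / m" by (simp add: diff_divide_distrib[symmetric] algebra_simps)
    have "d (k * t / m) \<le> 2 * d (Suc k * t / m)"
      unfolding d_def by (rule flow_step[OF fl L2 C lip bnd x y a0 ab b1]) (use w step in simp)
    hence "2 ^ k * d (k * t / m) \<le> 2 ^ k * (2 * d (Suc k * t / m))" by (rule mult_left_mono) simp
    with IH have "d 0 \<le> 2 ^ k * (2 * d (Suc k * t / m))" by (rule order_trans)
    thus ?case by (simp add: algebra_simps)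
  qed
  have "d 0 \<le> 2 ^ m * d (m * t / m)" by (rule ind) simp
  moreover have "m * t / m = t" using m0 by simp
  moreover have "d 0 = norm (x - y)" using fl x y unfolding is_flow_def d_def by simp
  ultimately show ?thesis unfolding m_def d_def by simp
qed



lemma dir_bound:
  fixes \<Omega> :: "'a::euclidean_space set" and F :: "'a \<Rightarrow> real" and g :: "'a \<Rightarrow> 'a"
    and D :: "'a \<Rightarrow> 'a \<Rightarrow>\<^sub>L 'a"
  assumes \<Omega>o: "open \<Omega>" and \<Omega>b: "bounded \<Omega>"
    and Fm: "(\<lambda>x. indicator \<Omega> x * F x) \<in> borel_measurable borel"
    and Fb: "\<And>x. x \<in> \<Omega> \<Longrightarrow> \<bar>F x\<bar> \<le> B" and B0: "0 \<le> B"
    and Fl: "\<And>x y. x \<in> \<Omega> \<Longrightarrow> y \<in> \<Omega> \<Longrightarrow> \<bar>F x - F y\<bar> \<le> \<Lambda> * norm (x - y)" and \<Lambda>0: "0 \<le> \<Lambda>"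
    and gD: "\<And>x. (g has_derivative blinfun_apply (D x)) (at x)" and Dc: "continuous_on UNIV D"
    and Kc: "compact (closure {x. g x \<noteq> 0})" and K\<Omega>: "closure {x. g x \<noteq> 0} \<subseteq> \<Omega>"
    and g1: "\<And>x. norm (g x) \<le> 1"
    and i: "i \<in> Basis"
  shows "integrable lborel (\<lambda>x. indicator \<Omega> x * F x * (blinfun_apply (D x) i \<bullet> i)) \<and>
    integral\<^sup>L lborel (\<lambda>x. indicator \<Omega> x * F x * (blinfun_apply (D x) i \<bullet> i)) \<le> \<Lambda> * measure lborel \<Omega>"
proof -
  define K where "K = closure {x. g x \<noteq> 0}"
  define Fo where "Fo x = indicator \<Omega> x * F x" for x
  define G where "G x = g x \<bullet> i" for x
  define DG where "DG x = blinfun_apply (D x) i \<bullet> i" for x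
  have gz: "g x = 0" if "x \<notin> K" for x
    using that closure_subset[of "{x. g x \<noteq> 0}"] unfolding K_def by auto
  have Fob: "\<bar>Fo x\<bar> \<le> indicator \<Omega> x * B" for x
    using Fb[of x] B0 by (cases "x \<in> \<Omega>") (simp_all add: Fo_def)
  have ni: "norm i = 1" using i by simp
  have "compact (D ` K)"
    by (rule compact_continuous_image[OF continuous_on_subset[OF Dc]]) (use Kc K_def in auto)
  hence "bounded (D ` K)" by (rule compact_imp_bounded)
  then obtain b where b: "\<And>x. x \<in> K \<Longrightarrow> norm (D x) \<le> b" unfolding bounded_iff by blast
  define Lg where "Lg = max b 0"
  have Lg0: "0 \<le> Lg" by (simp add: Lg_def)
  have DLg: "norm (D x) \<le> Lg" for x
  proof (cases "x \<in> K")
    case True thus ?thesis using b[OF True] by (simp add: Lg_def)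
  next
    case False
    have "((\<lambda>_. 0) has_derivative (\<lambda>_. 0)) (at x)" by simp
    hence "(g has_derivative (\<lambda>_. 0)) (at x)"
    proof (rule has_derivative_transform_within_open[where s="- K"])
      show "open (- K)" unfolding K_def by (intro open_Compl closed_closure)
      show "x \<in> - K" using False by simp
      show "\<And>y. y \<in> - K \<Longrightarrow> 0 = g y" using gz by fastforce
    qed
    hence "blinfun_apply (D x) = (\<lambda>_. 0)" using has_derivative_unique[OF gD[of x]] by blast
    hence "D x = 0" by (metis blinfun_eqI zero_blinfun.rep_eq)
    thus ?thesis using Lg0 by simp
  qed
  have glip: "norm (g y - g x) \<le> Lg * norm (y - x)" for x y
    by (rule differentiable_bound[where S=UNIV and f'="\<lambda>x. blinfun_apply (D x)"])
       (use gD DLg in \<open>auto simp: norm_blinfun.rep_eq\<close>)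
  have Glip: "\<bar>G y - G x\<bar> \<le> Lg * norm (y - x)" for x y
  proof -
    have "\<bar>G y - G x\<bar> = \<bar>(g y - g x) \<bullet> i\<bar>" by (simp add: G_def inner_diff_left)
    also have "\<dots> \<le> norm (g y - g x)" by (rule Basis_le_norm[OF i])
    finally show ?thesis using glip[of y x] by linarith
  qed
  have Gb: "\<bar>G x\<bar> \<le> 1" for x
    using Basis_le_norm[OF i, of "g x"] g1[of x] by (simp add: G_def)
  obtain \<delta> where \<delta>: "\<delta> > 0" "(\<Union>y\<in>K. ball y \<delta>) \<subseteq> \<Omega>"
    using compact_subset_open_imp_ball_epsilon_subset[OF Kc \<Omega>o K\<Omega>] unfolding K_def by blast
  have gc: "continuous_on UNIV g"
    using gD by (intro has_derivative_continuous_on) auto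
  have Gcs: "continuous_on UNIV (\<lambda>x. G (x + c))" for c
    unfolding G_def by (intro continuous_intros continuous_on_compose2[OF gc]) auto
  have mGs: "(\<lambda>x. G (x + c)) \<in> borel_measurable borel" for c
    by (rule borel_measurable_continuous_onI[OF Gcs])
  have mG: "G \<in> borel_measurable borel" using mGs[of 0] by simp
  have mDG: "DG \<in> borel_measurable borel"
    unfolding DG_def by (rule borel_measurable_continuous_onI) (intro continuous_intros Dc)
  have mFo: "Fo \<in> borel_measurable borel" using Fm unfolding Fo_def[abs_def] .
  have \<Omega>s: "\<Omega> \<in> sets lborel" using \<Omega>o by simp
  have int_ind: "integrable lborel (indicator \<Omega> :: 'a \<Rightarrow> real)"
    by (rule integrable_real_indicator[OF \<Omega>s emeasure_bounded_finite[OF \<Omega>b]])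
  have int_c: "integrable lborel (\<lambda>x. c * indicator \<Omega> x :: real)" for c
    by (rule integrable_mult_right) (rule int_ind)
  have int_ind_val: "integral\<^sup>L lborel (\<lambda>x. c * indicator \<Omega> x :: real) = c * measure lborel \<Omega>" for c
    by (simp add: integral_indicator)
  have bnd1: "AE x in lborel. norm (Fo x * G (x + c)) \<le> norm (B * indicator \<Omega> x)" for c
  proof (rule AE_I2)
    fix x
    have "\<bar>Fo x * G (x + c)\<bar> \<le> (indicator \<Omega> x * B) * 1"
      unfolding abs_mult by (rule mult_mono[OF Fob Gb]) (use B0 in auto)
    thus "norm (Fo x * G (x + c)) \<le> norm (B * indicator \<Omega> x)" using B0 by (simp add: mult.commute)
  qed
  have iA: "integrable lborel (\<lambda>x. Fo x * G (x + c))" for c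
    by (rule Bochner_Integration.integrable_bound[OF int_c _ bnd1])
       (use mFo mGs in \<open>simp add: measurable_lborel2\<close>)
  have iB: "integrable lborel (\<lambda>x. Fo x * G x)"
    using iA[of 0] by simp
  have est: "integral\<^sup>L lborel (\<lambda>x. Fo x * ((G (x + h *\<^sub>R i) - G x) / h)) \<le> \<Lambda> * measure lborel \<Omega>"
    if h: "0 < h" "h < \<delta>" for h
  proof -
    define c where "c = h *\<^sub>R i"
    have nc: "norm c = h" using h ni by (simp add: c_def)
    define H where "H y = Fo (y - c) * G y" for y
    have mH: "H \<in> borel_measurable borel"
    proof -
      have "(\<lambda>y. Fo (y - c)) \<in> borel_measurable borel"
        by (rule measurable_compose[OF _ mFo]) simp
      thus ?thesis unfolding H_def[abs_def] using mG by (intro borel_measurable_times) auto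
    qed
    have HH: "(\<lambda>x. H (c + x)) = (\<lambda>x. Fo x * G (x + c))"
      by (rule ext) (simp add: H_def add.commute)
    have iH: "integrable lborel H"
    proof -
      have "integrable lborel (\<lambda>x. H (c + x))" unfolding HH by (rule iA)
      hence "integrable (distr lborel borel ((+) c)) H"
        by (subst integrable_distr_eq) (use mH in auto)
      thus ?thesis by (simp add: lborel_distr_plus)
    qed
    have tH: "integral\<^sup>L lborel H = integral\<^sup>L lborel (\<lambda>x. Fo x * G (x + c))"
    proof -
      have "integral\<^sup>L lborel H = integral\<^sup>L (distr lborel borel ((+) c)) H" by (simp add: lborel_distr_plus)
      also have "\<dots> = integral\<^sup>L lborel (\<lambda>x. H (c + x))" by (rule integral_distr) (use mH in auto)
      finally show ?thesis unfolding HH .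
    qed
    have eq1: "(\<lambda>x. Fo x * ((G (x + h *\<^sub>R i) - G x) / h)) = (\<lambda>x. (Fo x * G (x + c) - Fo x * G x) / h)"
      by (rule ext) (simp add: c_def right_diff_distrib)
    have "integral\<^sup>L lborel (\<lambda>x. Fo x * ((G (x + h *\<^sub>R i) - G x) / h))
        = (integral\<^sup>L lborel (\<lambda>x. Fo x * G (x + c)) - integral\<^sup>L lborel (\<lambda>x. Fo x * G x)) / h"
      unfolding eq1 integral_divide_zero by (subst Bochner_Integration.integral_diff[OF iA iB]) simp
    also have "\<dots> = integral\<^sup>L lborel (\<lambda>y. H y - Fo y * G y) / h"
      unfolding tH[symmetric] by (subst Bochner_Integration.integral_diff[OF iH iB]) simp
    also have "\<dots> \<le> integral\<^sup>L lborel (\<lambda>y. (\<Lambda> * h) * indicator \<Omega> y) / h"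
    proof (rule divide_right_mono)
      show "0 \<le> h" using h by simp
      show "integral\<^sup>L lborel (\<lambda>y. H y - Fo y * G y) \<le> integral\<^sup>L lborel (\<lambda>y. (\<Lambda> * h) * indicator \<Omega> y)"
      proof (rule Bochner_Integration.integral_mono)
        show "integrable lborel (\<lambda>y. H y - Fo y * G y)" by (rule Bochner_Integration.integrable_diff[OF iH iB])
        show "integrable lborel (\<lambda>y. (\<Lambda> * h) * indicator \<Omega> y :: real)" by (rule int_c)
        fix y
        show "H y - Fo y * G y \<le> (\<Lambda> * h) * indicator \<Omega> y"
        proof (cases "g y = 0")
          case True thus ?thesis using \<Lambda>0 h by (simp add: H_def G_def)
        next
          case False
          hence yK: "y \<in> K" unfolding K_def using closure_subset[of "{x. g x \<noteq> 0}"] by auto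
          hence yO: "y \<in> \<Omega>" using K\<Omega> unfolding K_def by auto
          have yb: "y - c \<in> ball y \<delta>" using nc h by (simp add: dist_norm)
          have ycO: "y - c \<in> \<Omega>" by (rule subsetD[OF \<delta>(2) UN_I[where B="\<lambda>y. ball y \<delta>", OF yK yb]])
          have "H y - Fo y * G y = (F (y - c) - F y) * G y"
            using yO ycO by (simp add: H_def Fo_def algebra_simps)
          also have "\<dots> \<le> \<bar>F (y - c) - F y\<bar> * \<bar>G y\<bar>" by (simp add: abs_mult[symmetric])
          also have "\<dots> \<le> (\<Lambda> * norm (y - c - y)) * 1"
            by (rule mult_mono[OF Fl[OF ycO yO] Gb]) (use \<Lambda>0 in auto)
          also have "\<dots> = (\<Lambda> * h) * indicator \<Omega> y" using yO nc by simp
          finally show ?thesis .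
        qed
      qed
    qed
    also have "\<dots> = \<Lambda> * measure lborel \<Omega>" using h unfolding int_ind_val by simp
    finally show ?thesis .
  qed
  define hh where "hh k = inverse (real (Suc k))" for k
  have hh0: "0 < hh k" for k by (simp add: hh_def)
  define s where "s k x = Fo x * ((G (x + hh k *\<^sub>R i) - G x) / hh k)" for k x
  have plim: "(\<lambda>k. (G (x + hh k *\<^sub>R i) - G x) / hh k) \<longlonglongrightarrow> DG x" for x
  proof -
    have d0: "(g has_derivative blinfun_apply (D x)) (at (x + 0 *\<^sub>R i))" using gD[of x] by simp
    have d1: "((\<lambda>h. x + h *\<^sub>R i) has_derivative (\<lambda>h. h *\<^sub>R i)) (at 0)"
      by (auto intro!: derivative_eq_intros)
    have d2: "((\<lambda>h. g (x + h *\<^sub>R i)) has_derivative (\<lambda>h. blinfun_apply (D x) (h *\<^sub>R i))) (at 0)"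
      using has_derivative_compose[OF d1 d0] by simp
    have d3: "((\<lambda>h. G (x + h *\<^sub>R i)) has_derivative (\<lambda>h. blinfun_apply (D x) (h *\<^sub>R i) \<bullet> i)) (at 0)"
      unfolding G_def by (rule has_derivative_inner_left[OF d2])
    have "(\<lambda>h. blinfun_apply (D x) (h *\<^sub>R i) \<bullet> i) = (*) (DG x)"
      by (rule ext) (simp add: DG_def blinfun.scaleR_right)
    hence d4: "((\<lambda>h. G (x + h *\<^sub>R i)) has_field_derivative DG x) (at 0)"
      using d3 by (simp add: has_field_derivative_def)
    have lim: "((\<lambda>y. (G (x + y *\<^sub>R i) - G x) / y) \<longlongrightarrow> DG x) (at 0)"
      using d4 unfolding has_field_derivative_iff by simp
    have hhl: "hh \<longlonglongrightarrow> 0" unfolding hh_def[abs_def] by (rule LIMSEQ_inverse_real_of_nat)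
    have filt: "filterlim hh (at 0) sequentially"
    proof -
      have "hh k \<noteq> 0" for k using hh0[of k] by simp
      thus ?thesis unfolding filterlim_at using hhl by (auto intro!: always_eventually)
    qed
    show ?thesis by (rule filterlim_compose[OF lim filt])
  qed
  have sb: "norm (s k x) \<le> (B * Lg) * indicator \<Omega> x" for k x
  proof -
    have "\<bar>G (x + hh k *\<^sub>R i) - G x\<bar> \<le> Lg * norm (x + hh k *\<^sub>R i - x)" by (rule Glip)
    also have "\<dots> = Lg * hh k" using ni hh0[of k] by simp
    finally have "\<bar>G (x + hh k *\<^sub>R i) - G x\<bar> / hh k \<le> Lg" using hh0[of k] by (simp add: divide_le_eq)
    hence "\<bar>Fo x\<bar> * (\<bar>G (x + hh k *\<^sub>R i) - G x\<bar> / hh k) \<le> (indicator \<Omega> x * B) * Lg"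
      by (intro mult_mono Fob) (use B0 hh0[of k] in auto)
    thus ?thesis unfolding s_def using hh0[of k] by (simp add: abs_mult mult_ac)
  qed
  have mf: "(\<lambda>x. Fo x * DG x) \<in> borel_measurable lborel"
    unfolding measurable_lborel2 using mFo mDG by (rule borel_measurable_times)
  have ms: "s k \<in> borel_measurable lborel" for k
    unfolding measurable_lborel2 s_def[abs_def] using mFo mGs mG
    by (intro borel_measurable_times borel_measurable_divide borel_measurable_diff) auto
  have lims: "AE x in lborel. (\<lambda>k. s k x) \<longlonglongrightarrow> Fo x * DG x"
    by (rule AE_I2) (unfold s_def, rule tendsto_mult_left, rule plim)
  have bnds: "AE x in lborel. norm (s k x) \<le> (B * Lg) * indicator \<Omega> x" for k
    by (rule AE_I2) (rule sb)
  note DCT = integrable_dominated_convergence[OF mf ms int_c lims bnds]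
    integral_dominated_convergence[OF mf ms int_c lims bnds]
  obtain N where N: "inverse (real (Suc N)) < \<delta>" using reals_Archimedean[OF \<delta>(1)] by blast
  have ev: "\<forall>k\<ge>N. integral\<^sup>L lborel (s k) \<le> \<Lambda> * measure lborel \<Omega>"
  proof (intro allI impI)
    fix k assume k: "N \<le> k"
    have "hh k \<le> hh N" unfolding hh_def using k by (simp add: le_imp_inverse_le)
    moreover have "hh N < \<delta>" using N unfolding hh_def .
    ultimately have "hh k < \<delta>" by linarith
    from est[OF hh0 this] show "integral\<^sup>L lborel (s k) \<le> \<Lambda> * measure lborel \<Omega>"
      by (simp add: s_def[abs_def])
  qed
  have "integral\<^sup>L lborel (\<lambda>x. Fo x * DG x) \<le> \<Lambda> * measure lborel \<Omega>"
    by (rule LIMSEQ_le_const2[OF DCT(2)]) (use ev in blast)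
  moreover have "(\<lambda>x. indicator \<Omega> x * F x * (blinfun_apply (D x) i \<bullet> i)) = (\<lambda>x. Fo x * DG x)"
    by (simp add: Fo_def DG_def)
  ultimately show ?thesis using DCT(1) by simp
qed



lemma TV_lip:
  fixes \<Omega> :: "'a::euclidean_space set" and F :: "'a \<Rightarrow> real"
  assumes \<Omega>o: "open \<Omega>" and \<Omega>b: "bounded \<Omega>"
    and Fm: "(\<lambda>x. indicator \<Omega> x * F x) \<in> borel_measurable borel"
    and Fb: "\<And>x. x \<in> \<Omega> \<Longrightarrow> \<bar>F x\<bar> \<le> B" and B0: "0 \<le> B"
    and Fl: "\<And>x y. x \<in> \<Omega> \<Longrightarrow> y \<in> \<Omega> \<Longrightarrow> \<bar>F x - F y\<bar> \<le> \<Lambda> * norm (x - y)" and \<Lambda>0: "0 \<le> \<Lambda>"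
  shows "total_variation \<Omega> F \<le> ereal (real DIM('a) * \<Lambda> * measure lborel \<Omega>)"
  unfolding total_variation_def
proof (rule SUP_least)
  fix g assume g: "g \<in> BV_test_fields \<Omega>"
  from g obtain D where gD: "\<And>x. (g has_derivative blinfun_apply (D x)) (at x)"
    and Dc: "continuous_on UNIV D"
    and Kc: "compact (closure {x. g x \<noteq> 0})" and K\<Omega>: "closure {x. g x \<noteq> 0} \<subseteq> \<Omega>"
    and g1: "\<And>x. norm (g x) \<le> 1"
    unfolding BV_test_fields_def C1_everywhere_def by blast
  note db = dir_bound[OF \<Omega>o \<Omega>b Fm Fb B0 Fl \<Lambda>0 gD Dc Kc K\<Omega> g1]
  have eq: "(\<lambda>x. indicator \<Omega> x *\<^sub>R (F x * divergence g x))
      = (\<lambda>x. \<Sum>i\<in>Basis. indicator \<Omega> x * F x * (blinfun_apply (D x) i \<bullet> i))"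
  proof (rule ext)
    fix x
    have "divergence g x = (\<Sum>i\<in>Basis. blinfun_apply (D x) i \<bullet> i)"
      unfolding divergence_def frechet_derivative_at[OF gD[of x], symmetric] ..
    thus "indicator \<Omega> x *\<^sub>R (F x * divergence g x) = (\<Sum>i\<in>Basis. indicator \<Omega> x * F x * (blinfun_apply (D x) i \<bullet> i))"
      by (simp add: sum_distrib_left mult.assoc)
  qed
  have "(LINT x:\<Omega>|lborel. F x * divergence g x)
      = integral\<^sup>L lborel (\<lambda>x. \<Sum>i\<in>Basis. indicator \<Omega> x * F x * (blinfun_apply (D x) i \<bullet> i))"
    unfolding set_lebesgue_integral_def eq ..
  also have "\<dots> = (\<Sum>i\<in>Basis. integral\<^sup>L lborel (\<lambda>x. indicator \<Omega> x * F x * (blinfun_apply (D x) i \<bullet> i)))"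
    by (rule Bochner_Integration.integral_sum) (use db in blast)
  also have "\<dots> \<le> (\<Sum>i\<in>(Basis::'a set). \<Lambda> * measure lborel \<Omega>)"
    by (rule sum_mono) (use db in blast)
  also have "\<dots> = real DIM('a) * \<Lambda> * measure lborel \<Omega>" by simp
  finally show "ereal (LINT x:\<Omega>|lborel. F x * divergence g x) \<le> ereal (real DIM('a) * \<Lambda> * measure lborel \<Omega>)"
    by simp
qed



lemma set_int_abs_le:
  fixes g h :: "'a::euclidean_space \<Rightarrow> real"
  assumes gi: "set_integrable lborel A g" and hi: "set_integrable lborel A h"
    and le: "\<And>y. y \<in> A \<Longrightarrow> \<bar>g y\<bar> \<le> h y"
  shows "\<bar>LINT y:A|lborel. g y\<bar> \<le> (LINT y:A|lborel. h y)"
proof -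
  have "norm (integral\<^sup>L lborel (\<lambda>y. indicator A y *\<^sub>R g y)) \<le> integral\<^sup>L lborel (\<lambda>y. indicator A y *\<^sub>R h y)"
  proof (rule Bochner_Integration.integral_norm_bound_integral)
    show "integrable lborel (\<lambda>y. indicator A y *\<^sub>R g y)" using gi unfolding set_integrable_def .
    show "integrable lborel (\<lambda>y. indicator A y *\<^sub>R h y)" using hi unfolding set_integrable_def .
    fix y show "norm (indicator A y *\<^sub>R g y) \<le> indicator A y *\<^sub>R h y"
      by (cases "y \<in> A") (use le[of y] in auto)
  qed
  thus ?thesis unfolding set_lebesgue_integral_def by simp
qed

lemma conv_bounds:
  fixes f \<rho> :: "'a::euclidean_space \<Rightarrow> real"
  assumes fi: "set_integrable lborel \<Omega> f" and fM: "(LINT y:\<Omega>|lborel. \<bar>f y\<bar>) \<le> M"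
    and \<rho>m: "\<rho> \<in> borel_measurable borel" and \<rho>b: "\<And>z. \<bar>\<rho> z\<bar> \<le> c"
    and \<rho>l: "\<And>z z'. \<bar>\<rho> z - \<rho> z'\<bar> \<le> c * norm (z - z')"
  shows "\<bar>LINT y:\<Omega>|lborel. f y * \<rho> (x - y)\<bar> \<le> c * M"
    and "\<bar>(LINT y:\<Omega>|lborel. f y * \<rho> (x - y)) - (LINT y:\<Omega>|lborel. f y * \<rho> (x' - y))\<bar> \<le> c * M * norm (x - x')"
proof -
  have c0: "0 \<le> c" using \<rho>b[of 0] by linarith
  have fa: "set_integrable lborel \<Omega> (\<lambda>y. \<bar>f y\<bar>)" by (rule set_integrable_abs[OF fi])
  have fk: "set_integrable lborel \<Omega> (\<lambda>y. k * \<bar>f y\<bar>)" for k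
    by (rule set_integrable_mult_right) (rule fa)
  have fm: "(\<lambda>y. indicator \<Omega> y *\<^sub>R f y) \<in> borel_measurable lborel"
    using fi unfolding set_integrable_def by (rule borel_measurable_integrable)
  have gi: "set_integrable lborel \<Omega> (\<lambda>y. f y * \<rho> (z - y))" for z
  proof (rule set_integrable_bound[OF fk[of c]])
    have "(\<lambda>y. \<rho> (z - y)) \<in> borel_measurable lborel"
      unfolding measurable_lborel2 by (rule measurable_compose[OF _ \<rho>m]) simp
    hence "(\<lambda>y. (indicator \<Omega> y *\<^sub>R f y) * \<rho> (z - y)) \<in> borel_measurable lborel"
      using fm by (rule borel_measurable_times[rotated])
    thus "set_borel_measurable lborel \<Omega> (\<lambda>y. f y * \<rho> (z - y))"
      unfolding set_borel_measurable_def by (simp add: mult.assoc)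
    show "AE y in lborel. y \<in> \<Omega> \<longrightarrow> norm (f y * \<rho> (z - y)) \<le> norm (c * \<bar>f y\<bar>)"
    proof (rule AE_I2, rule impI)
      fix y
      have "\<bar>f y\<bar> * \<bar>\<rho> (z - y)\<bar> \<le> \<bar>f y\<bar> * c" by (rule mult_left_mono[OF \<rho>b]) simp
      thus "norm (f y * \<rho> (z - y)) \<le> norm (c * \<bar>f y\<bar>)" using c0 by (simp add: abs_mult mult.commute)
    qed
  qed
  have "\<bar>LINT y:\<Omega>|lborel. f y * \<rho> (x - y)\<bar> \<le> (LINT y:\<Omega>|lborel. c * \<bar>f y\<bar>)"
  proof (rule set_int_abs_le[OF gi fk])
    fix y have "\<bar>f y\<bar> * \<bar>\<rho> (x - y)\<bar> \<le> \<bar>f y\<bar> * c" by (rule mult_left_mono[OF \<rho>b]) simp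
    thus "\<bar>f y * \<rho> (x - y)\<bar> \<le> c * \<bar>f y\<bar>" by (simp add: abs_mult mult.commute)
  qed
  also have "\<dots> = c * (LINT y:\<Omega>|lborel. \<bar>f y\<bar>)" by simp
  also have "\<dots> \<le> c * M" by (rule mult_left_mono[OF fM c0])
  finally show "\<bar>LINT y:\<Omega>|lborel. f y * \<rho> (x - y)\<bar> \<le> c * M" .
  have "(LINT y:\<Omega>|lborel. f y * \<rho> (x - y)) - (LINT y:\<Omega>|lborel. f y * \<rho> (x' - y))
      = (LINT y:\<Omega>|lborel. f y * \<rho> (x - y) - f y * \<rho> (x' - y))"
    by (rule set_integral_diff(2)[OF gi gi, symmetric])
  also have "\<bar>\<dots>\<bar> \<le> (LINT y:\<Omega>|lborel. (c * norm (x - x')) * \<bar>f y\<bar>)"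
  proof (rule set_int_abs_le[OF set_integral_diff(1)[OF gi gi] fk])
    fix y
    have "\<bar>f y\<bar> * \<bar>\<rho> (x - y) - \<rho> (x' - y)\<bar> \<le> \<bar>f y\<bar> * (c * norm ((x - y) - (x' - y)))"
      by (rule mult_left_mono[OF \<rho>l]) simp
    thus "\<bar>f y * \<rho> (x - y) - f y * \<rho> (x' - y)\<bar> \<le> (c * norm (x - x')) * \<bar>f y\<bar>"
      by (simp add: abs_mult right_diff_distrib[symmetric] mult_ac)
  qed
  also have "\<dots> = (c * norm (x - x')) * (LINT y:\<Omega>|lborel. \<bar>f y\<bar>)" by simp
  also have "\<dots> \<le> (c * norm (x - x')) * M" by (rule mult_left_mono[OF fM]) (use c0 in simp)
  finally show "\<bar>(LINT y:\<Omega>|lborel. f y * \<rho> (x - y)) - (LINT y:\<Omega>|lborel. f y * \<rho> (x' - y))\<bar> \<le> c * M * norm (x - x')"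
    by (simp add: mult_ac)
qed

lemma TV_nonneg: "0 \<le> total_variation (\<Omega>::'a::euclidean_space set) f"
proof -
  have z: "(\<lambda>_. 0::'a) \<in> BV_test_fields \<Omega>"
    unfolding BV_test_fields_def C1_everywhere_def
    by (auto intro!: exI[of _ "\<lambda>_. 0"] simp: zero_blinfun.rep_eq)
  have dz: "divergence (\<lambda>_. 0::'a) x = 0" for x
  proof -
    have "frechet_derivative (\<lambda>_. 0::'a) (at x) = (\<lambda>_. 0)"
      using frechet_derivative_at[OF has_derivative_const[of "0::'a" "at x"]] by simp
    thus ?thesis by (simp add: divergence_def)
  qed
  have "ereal (LINT x:\<Omega>|lborel. f x * divergence (\<lambda>_. 0::'a) x) \<le> total_variation \<Omega> f"
    unfolding total_variation_def by (rule SUP_upper[OF z])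
  thus ?thesis by (simp add: dz zero_ereal_def)
qed



theorem lemma3p14:
  fixes \<Omega> :: "'a::euclidean_space set"
    and \<iota> :: "'v::{real_inner,complete_space} \<Rightarrow> ('a \<Rightarrow> 'a)"
    and v :: "nat \<Rightarrow> real \<Rightarrow> 'v"
    and f0 :: "nat \<Rightarrow> 'a \<Rightarrow> real"
    and \<phi> :: "nat \<Rightarrow> real \<Rightarrow> 'a \<Rightarrow> 'a"
    and \<epsilon> :: real
  assumes "DIM('a) \<ge> 2"
    and "open \<Omega>" and "bounded \<Omega>" and "lipschitz_boundary \<Omega>"
    and "admissible \<Omega> \<iota>"
    and "\<epsilon> > 0"
    and "\<forall>n. in_L2V (v n)" and "\<exists>K. \<forall>n. L2V_norm (v n) \<le> K"
    and "BV_bounded \<Omega> f0"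
    and "\<forall>n. is_flow \<Omega> \<iota> (v n) (\<phi> n)"
  shows "\<forall>t\<in>{0..1}. BV_bounded \<Omega> (\<lambda>n. moll_conv \<Omega> \<epsilon> (f0 n) \<circ> inv_into \<Omega> (\<phi> n t))"
proof
  fix t :: real assume t: "t \<in> {0..1}"
  note \<Omega>o = assms(2) and \<Omega>b = assms(3) and adm = assms(5) and \<epsilon> = assms(6)
    and L2 = assms(7) and fl = assms(10)
  from assms(8) obtain K where K: "\<And>n. L2V_norm (v n) \<le> K" by blast
  from assms(9) obtain M where fM: "\<And>n. set_integrable lborel \<Omega> (f0 n)" "\<And>n. BV_norm \<Omega> (f0 n) \<le> ereal M"
    unfolding BV_bounded_def by blast
  define M' where "M' = max M 0"
  have M'0: "0 \<le> M'" by (simp add: M'_def)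
  have L1: "(LINT x:\<Omega>|lborel. \<bar>f0 n x\<bar>) \<le> M'" for n
  proof -
    have "ereal (LINT x:\<Omega>|lborel. \<bar>f0 n x\<bar>) \<le> ereal (LINT x:\<Omega>|lborel. \<bar>f0 n x\<bar>) + total_variation \<Omega> (f0 n)"
      by (rule add_increasing2[OF TV_nonneg order_refl])
    also have "\<dots> \<le> ereal M" using fM(2)[of n] unfolding BV_norm_def .
    finally show ?thesis unfolding M'_def by simp
  qed
  obtain c where cb: "\<And>z. \<bar>mollifier_eps \<epsilon> (z::'a)\<bar> \<le> c"
    and cl: "\<And>z z'. \<bar>mollifier_eps \<epsilon> (z::'a) - mollifier_eps \<epsilon> z'\<bar> \<le> c * norm (z - z')"
    and cm: "mollifier_eps \<epsilon> \<in> borel_measurable (borel :: 'a measure)"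
    using moll_bounds[OF \<epsilon>] by blast
  have c0: "0 \<le> c" using cb[of 0] by linarith
  define \<psi> where "\<psi> n = inv_into \<Omega> (\<phi> n t)" for n
  have \<psi>O: "\<psi> n p \<in> \<Omega>" and \<phi>\<psi>: "\<phi> n t (\<psi> n p) = p" if "p \<in> \<Omega>" for n p
  proof -
    have bij: "bij_betw (\<phi> n t) \<Omega> \<Omega>" using fl t unfolding is_flow_def by blast
    show "\<psi> n p \<in> \<Omega>" unfolding \<psi>_def
      by (rule inv_into_into) (use bij_betw_imp_surj_on[OF bij] that in simp)
    show "\<phi> n t (\<psi> n p) = p" unfolding \<psi>_def by (rule bij_betw_inv_into_right[OF bij that])
  qed
  obtain A where A0: "0 \<le> A"
    and Al: "\<And>n p q. p \<in> \<Omega> \<Longrightarrow> q \<in> \<Omega> \<Longrightarrow> norm (\<psi> n p - \<psi> n q) \<le> A * norm (p - q)"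
  proof (cases "\<Omega> = {}")
    case True thus ?thesis using that[of 0] by simp
  next
    case False
    obtain C where C: "C > 0" and lip: "\<And>w p q. norm (\<iota> w p - \<iota> w q) \<le> (norm w / C) * norm (p - q)"
      using iota_lip[OF adm \<Omega>b False] by blast
    define A where "A = (2::real) ^ (nat \<lceil>4 * (K\<^sup>2 + 1) / C\<^sup>2\<rceil> + 1)"
    show ?thesis
    proof (rule that[of A])
      show "0 \<le> A" by (simp add: A_def)
      fix n p q assume p: "p \<in> \<Omega>" and q: "q \<in> \<Omega>"
      have "norm (\<psi> n p - \<psi> n q) \<le> A * norm (\<phi> n t (\<psi> n p) - \<phi> n t (\<psi> n q))"
        unfolding A_def
        by (rule flow_inv_lip[OF fl[rule_format] L2[rule_format] K C lip \<Omega>b \<psi>O[OF p] \<psi>O[OF q] t])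
      thus "norm (\<psi> n p - \<psi> n q) \<le> A * norm (p - q)" using \<phi>\<psi>[OF p] \<phi>\<psi>[OF q] by simp
    qed
  qed
  define B where "B = c * M'"
  define \<Lambda> where "\<Lambda> = c * M' * A"
  have B0: "0 \<le> B" using c0 M'0 by (simp add: B_def)
  have \<Lambda>0: "0 \<le> \<Lambda>" using c0 M'0 A0 by (simp add: \<Lambda>_def)
  define \<mu> where "\<mu> = measure lborel \<Omega>"
  have \<Omega>s: "\<Omega> \<in> sets lborel" using \<Omega>o by simp
  have int_ind: "integrable lborel (indicator \<Omega> :: 'a \<Rightarrow> real)"
    by (rule integrable_real_indicator[OF \<Omega>s emeasure_bounded_finite[OF \<Omega>b]])
  have int_c: "integrable lborel (\<lambda>x. k * indicator \<Omega> x :: real)" for k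
    by (rule integrable_mult_right) (rule int_ind)
  have sic: "set_integrable lborel \<Omega> (\<lambda>_. k::real)" for k
    unfolding set_integrable_def using int_c[of k] by (simp add: mult.commute)
  have siv: "(LINT x:\<Omega>|lborel. (k::real)) = k * \<mu>" for k
    unfolding set_lebesgue_integral_def \<mu>_def by (simp add: integral_indicator mult.commute)
  show "BV_bounded \<Omega> (\<lambda>n. moll_conv \<Omega> \<epsilon> (f0 n) \<circ> inv_into \<Omega> (\<phi> n t))"
    unfolding BV_bounded_def
  proof (intro exI[of _ "B * \<mu> + real DIM('a) * \<Lambda> * \<mu>"] allI conjI)
    fix n
    define Fn where "Fn = moll_conv \<Omega> \<epsilon> (f0 n) \<circ> inv_into \<Omega> (\<phi> n t)"
    have Fn_eq: "Fn x = (LINT y:\<Omega>|lborel. f0 n y * mollifier_eps \<epsilon> (\<psi> n x - y))" for x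
      by (simp add: Fn_def \<psi>_def moll_conv_def)
    note cb1 = conv_bounds[OF fM(1) L1 cm cb cl]
    have Fb: "\<bar>Fn x\<bar> \<le> B" if "x \<in> \<Omega>" for x
      unfolding Fn_eq B_def by (rule cb1(1))
    have Fl: "\<bar>Fn x - Fn y\<bar> \<le> \<Lambda> * norm (x - y)" if "x \<in> \<Omega>" "y \<in> \<Omega>" for x y
    proof -
      have "\<bar>Fn x - Fn y\<bar> \<le> c * M' * norm (\<psi> n x - \<psi> n y)"
        unfolding Fn_eq by (rule cb1(2))
      also have "\<dots> \<le> c * M' * (A * norm (x - y))"
        by (rule mult_left_mono[OF Al[OF that]]) (use c0 M'0 in simp)
      finally show ?thesis by (simp add: \<Lambda>_def mult_ac)
    qed
    have Fc: "continuous_on \<Omega> Fn"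
    proof (rule lipschitz_on_continuous_on)
      show "\<Lambda>-lipschitz_on \<Omega> Fn"
        by (rule lipschitz_onI) (use Fl \<Lambda>0 in \<open>auto simp: dist_real_def dist_norm\<close>)
    qed
    have Fm: "(\<lambda>x. indicator \<Omega> x * Fn x) \<in> borel_measurable borel"
      using borel_measurable_continuous_on_indicator[OF _ Fc] \<Omega>o by simp
    have Fi: "set_integrable lborel \<Omega> Fn"
      unfolding set_integrable_def
    proof (rule Bochner_Integration.integrable_bound[OF int_c[of B]])
      show "(\<lambda>x. indicator \<Omega> x *\<^sub>R Fn x) \<in> borel_measurable lborel"
        unfolding measurable_lborel2 using Fm by simp
      show "AE x in lborel. norm (indicator \<Omega> x *\<^sub>R Fn x) \<le> norm (B * indicator \<Omega> x)"
      proof (rule AE_I2)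
        fix x show "norm (indicator \<Omega> x *\<^sub>R Fn x) \<le> norm (B * indicator \<Omega> x)"
          by (cases "x \<in> \<Omega>") (use Fb[of x] B0 in auto)
      qed
    qed
    show "set_integrable lborel \<Omega> (moll_conv \<Omega> \<epsilon> (f0 n) \<circ> inv_into \<Omega> (\<phi> n t))"
      using Fi unfolding Fn_def .
    have l1: "(LINT x:\<Omega>|lborel. \<bar>Fn x\<bar>) \<le> B * \<mu>"
    proof -
      have "\<bar>LINT x:\<Omega>|lborel. \<bar>Fn x\<bar>\<bar> \<le> (LINT x:\<Omega>|lborel. B)"
        by (rule set_int_abs_le[OF set_integrable_abs[OF Fi] sic]) (use Fb in simp)
      thus ?thesis unfolding siv by linarith
    qed
    have tv: "total_variation \<Omega> Fn \<le> ereal (real DIM('a) * \<Lambda> * \<mu>)"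
      unfolding \<mu>_def by (rule TV_lip[OF \<Omega>o \<Omega>b Fm Fb B0 Fl \<Lambda>0])
    have "BV_norm \<Omega> Fn \<le> ereal (B * \<mu>) + ereal (real DIM('a) * \<Lambda> * \<mu>)"
      unfolding BV_norm_def by (rule add_mono) (use l1 tv in simp_all)
    thus "BV_norm \<Omega> (moll_conv \<Omega> \<epsilon> (f0 n) \<circ> inv_into \<Omega> (\<phi> n t)) \<le> ereal (B * \<mu> + real DIM('a) * \<Lambda> * \<mu>)"
      unfolding Fn_def by simp
  qed
qed

end
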